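(* Let $\delta=x^{\mathbf d}f(\theta)$ be a homogeneous differential operator of degree $\mathbf d$ with $\mathbf d\neq\mathbf 0$ and $-\mathbf d\in S$. Let $\mathcal B\subseteq\mathbb N^n$ be compatible with $\mathbf d$ and such that $\delta$ fixes the ideal $I_{\mathcal B}=(x^{\mathbf a}\mid\mathbf a\in V'_{\mathrm{mon}}(f)\cap W_{\mathcal B})$. Then for every $\mathcal B'\subseteq\mathbb N^n$ compatible with $\mathbf d$ with $W_{\mathcal B'}\subseteq W_{\mathcal B}$, the ideal $I_{\mathcal B'}=(x^{\mathbf a}\mid\mathbf a\in V'_{\mathrm{mon}}(f)\cap W_{\mathcal B'})$ is $\delta$-fixed.
   Context: Standing notation. Fix $d\ge 1$. Let $\sigma\subseteq\mathbb R^d$ be a full-dimensional, strongly convex rational polyhedral cone, so $\sigma^\vee$ is full-dimensional and strongly convex. $S=\sigma^\vee\cap\mathbb Z^d$, $R=\mathbb C[S]$ with monomial basis $x^{\mathbf a}$, $\mathbf a\in S$. $h_1,\dots,h_n$ are the primitive support functions of the facets of $\sigma^\vee$, so $S=\{\mathbf a\in\mathbb Z^d:h_i(\mathbf a)\ge0\ \forall i\}$. $(g,m)!=\prod_{j=0}^m(g-j)$ for $m\ge0$, $=1$ for $m<0$; $H_{\mathbf d}=\prod_i(h_i,h_i(-\mathbf d)-1)!$. For $f$ divisible by $H_{\mathbf d}$, $\delta=x^{\mathbf d}f(\theta)$ acts by $\delta(x^{\mathbf a})=f(\mathbf a)x^{\mathbf a+\mathbf d}$. $I$ is $\delta$-fixed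 if $\delta(I)=I$. $V_{\mathrm{mon}}(f)=\{\mathbf a\in\mathbb Z^d:f(\mathbf a)=0\}$. Write $\mathbf d=q\mathbf e$ with $q\in\mathbb Z_{\ge1}$, $\mathbf e$ primitive. For $\mathbf a\in\mathbb Z^d$, $\operatorname{val}(\mathbf a)=\inf\{t\in\mathbb R:\mathbf a+t\mathbf d\in V_{\mathrm{mon}}(f)\}\in\mathbb R\cup\{\pm\infty\}$ ($\inf\emptyset=+\infty$). When $\operatorname{val}(\mathbf a)$ is finite, $\operatorname{pval}(\mathbf a)=\max\{t\in[\operatorname{val}(\mathbf a),\operatorname{val}(\mathbf a)+1):\mathbf a+t\mathbf d\in V_{\mathrm{mon}}(f)\}$ and $\operatorname{vpt}(\mathbf a)=\mathbf a+\operatorname{pval}(\mathbf a)\mathbf d$. $V'_{\mathrm{mon}}(f)=\{\operatorname{vpt}(\mathbf a):\mathbf a\in\mathbb Z^d,\ \operatorname{val}(\mathbf a)\text{ finite}\}$. A tuple $\beta\in\mathbb N^n$ is compatible with $\mathbf d$ if for every $i$, $\beta_i=0$ or $h_i(\mathbf d)=0$; $\mathcal B\subseteq\mathbb N^n$ is compatible with $\mathbf d$ if each element is. $W_\beta=\{\mathbf a\in S: h_i(\mathbf a)\ge\beta_i\ \forall i\}$, $W_{\mathcal B}=\bigcup_{\beta\in\mathcal B}W_\beta$. *)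

theory Defs
  imports Complex_Main "HOL-Library.Poly_Mapping" "HOL-Library.Function_Algebras"
begin

text \<open>Lattice points of Z^d are functions 'n \<Rightarrow> int, with 'n a finite index type, d = CARD('n).
  A linear form with integer coefficients c :: 'n \<Rightarrow> int acts on integer / real points.\<close>

definition lin :: "('n::finite \<Rightarrow> int) \<Rightarrow> ('n \<Rightarrow> int) \<Rightarrow> int" where
  "lin c a = (\<Sum>k\<in>UNIV. c k * a k)"

definition linR :: "('n::finite \<Rightarrow> int) \<Rightarrow> ('n \<Rightarrow> real) \<Rightarrow> real" where
  "linR c x = (\<Sum>k\<in>UNIV. real_of_int (c k) * x k)"

text \<open>hs = [h_1,...,h_n] is the list of primitive support functions of the facets of
  sigma^vee, for sigma^vee full-dimensional and strongly convex:
  sigma^vee = {x. \<forall>i. h_i x \<ge> 0}; each h_i primitive; the system is irredundant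
  (so every h_i defines a facet); sigma^vee has nonempty interior; sigma^vee contains no line.\<close>

definition facet_data :: "('n::finite \<Rightarrow> int) list \<Rightarrow> bool" where
  "facet_data hs \<longleftrightarrow>
     distinct hs \<and>
     (\<forall>h\<in>set hs. Gcd (range h) = 1) \<and>
     (\<exists>x. \<forall>h\<in>set hs. linR h x > 0) \<and>
     (\<forall>x. (\<forall>h\<in>set hs. linR h x = 0) \<longrightarrow> x = 0) \<and>
     (\<forall>i<length hs. \<exists>x. linR (hs!i) x < 0 \<and> (\<forall>j<length hs. j \<noteq> i \<longrightarrow> linR (hs!j) x \<ge> 0))"

definition semigrp :: "('n::finite \<Rightarrow> int) list \<Rightarrow> ('n \<Rightarrow> int) set" where
  "semigrp hs = {a. \<forall>h\<in>set hs. lin h a \<ge> 0}"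

text \<open>Laurent polynomials C[Z^d] as finitely supported functions; R = C[S] is the
  subring of those supported in S.  Multiplication is convolution.\<close>

type_synonym 'n laurent = "('n \<Rightarrow> int) \<Rightarrow>\<^sub>0 complex"

definition xmon :: "('n \<Rightarrow> int) \<Rightarrow> 'n laurent" where
  "xmon a = Poly_Mapping.single a 1"

definition ringR :: "('n::finite \<Rightarrow> int) list \<Rightarrow> 'n laurent set" where
  "ringR hs = {p. Poly_Mapping.keys p \<subseteq> semigrp hs}"

definition mon_ideal :: "('n::finite \<Rightarrow> int) list \<Rightarrow> ('n \<Rightarrow> int) set \<Rightarrow> 'n laurent set" where
  "mon_ideal hs E = {p. \<exists>F r. finite F \<and> F \<subseteq> E \<and> (\<forall>a\<in>F. r a \<in> ringR hs) \<and>
                          p = (\<Sum>a\<in>F. r a * xmon a)}"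

text \<open>Polynomials in theta_1..theta_d (multivariate polynomials over C) as finitely supported
  maps from exponent vectors to coefficients; evaluation at an integer point.\<close>

type_synonym 'n mpoly = "('n \<Rightarrow>\<^sub>0 nat) \<Rightarrow>\<^sub>0 complex"

definition peval :: "'n::finite mpoly \<Rightarrow> ('n \<Rightarrow> int) \<Rightarrow> complex" where
  "peval f a = (\<Sum>m\<in>Poly_Mapping.keys f. Poly_Mapping.lookup f m * (\<Prod>k\<in>UNIV. (of_int (a k)) ^ Poly_Mapping.lookup m k))"

definition pconst :: "complex \<Rightarrow> 'n mpoly" where
  "pconst c = Poly_Mapping.single 0 c"

definition pvar :: "'n \<Rightarrow> 'n mpoly" where
  "pvar k = Poly_Mapping.single (Poly_Mapping.single k 1) 1"

definition plin :: "('n::finite \<Rightarrow> int) \<Rightarrow> 'n mpoly" where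
  "plin c = (\<Sum>k\<in>UNIV. pconst (of_int (c k)) * pvar k)"

definition fallfac :: "'n mpoly \<Rightarrow> int \<Rightarrow> 'n mpoly" where
  "fallfac g m = (if m < 0 then 1 else (\<Prod>j\<in>{0..nat m}. g - pconst (of_nat j)))"

definition Hpoly :: "('n::finite \<Rightarrow> int) list \<Rightarrow> ('n \<Rightarrow> int) \<Rightarrow> 'n mpoly" where
  "Hpoly hs d = (\<Prod>i<length hs. fallfac (plin (hs!i)) (lin (hs!i) (- d) - 1))"

text \<open>delta = x^d f(theta), acting by x^a \<mapsto> f(a) x^(a+d), extended linearly.\<close>

definition delta :: "('n::finite \<Rightarrow> int) \<Rightarrow> 'n mpoly \<Rightarrow> 'n laurent \<Rightarrow> 'n laurent" where
  "delta d f p = (\<Sum>a\<in>Poly_Mapping.keys p. Poly_Mapping.single (a + d) (Poly_Mapping.lookup p a * peval f a))"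

definition delta_fixed :: "('n::finite \<Rightarrow> int) \<Rightarrow> 'n mpoly \<Rightarrow> 'n laurent set \<Rightarrow> bool" where
  "delta_fixed d f I \<longleftrightarrow> delta d f ` I = I"

definition Vmon :: "'n::finite mpoly \<Rightarrow> ('n \<Rightarrow> int) set" where
  "Vmon f = {a. peval f a = 0}"

definition Tset :: "('n::finite \<Rightarrow> int) \<Rightarrow> 'n mpoly \<Rightarrow> ('n \<Rightarrow> int) \<Rightarrow> real set" where
  "Tset d f a = {t. \<exists>b\<in>Vmon f. (\<lambda>k. real_of_int (b k)) = (\<lambda>k. real_of_int (a k) + t * real_of_int (d k))}"

definition val_finite :: "('n::finite \<Rightarrow> int) \<Rightarrow> 'n mpoly \<Rightarrow> ('n \<Rightarrow> int) \<Rightarrow> bool" where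
  "val_finite d f a \<longleftrightarrow> Tset d f a \<noteq> {} \<and> bdd_below (Tset d f a)"

definition val :: "('n::finite \<Rightarrow> int) \<Rightarrow> 'n mpoly \<Rightarrow> ('n \<Rightarrow> int) \<Rightarrow> real" where
  "val d f a = Inf (Tset d f a)"

definition pval :: "('n::finite \<Rightarrow> int) \<Rightarrow> 'n mpoly \<Rightarrow> ('n \<Rightarrow> int) \<Rightarrow> real" where
  "pval d f a = Max {t\<in>Tset d f a. val d f a \<le> t \<and> t < val d f a + 1}"

definition Vmon' :: "('n::finite \<Rightarrow> int) \<Rightarrow> 'n mpoly \<Rightarrow> ('n \<Rightarrow> int) set" where
  "Vmon' d f = {b. \<exists>a. val_finite d f a \<and>
      (\<lambda>k. real_of_int (b k)) = (\<lambda>k. real_of_int (a k) + pval d f a * real_of_int (d k))}"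

text \<open>Tuples beta \<in> N^n are lists of length n = length hs.\<close>

definition compatible :: "('n::finite \<Rightarrow> int) list \<Rightarrow> ('n \<Rightarrow> int) \<Rightarrow> nat list \<Rightarrow> bool" where
  "compatible hs d \<beta> \<longleftrightarrow> length \<beta> = length hs \<and>
      (\<forall>i<length hs. \<beta>!i = 0 \<or> lin (hs!i) d = 0)"

definition Wset :: "('n::finite \<Rightarrow> int) list \<Rightarrow> nat list \<Rightarrow> ('n \<Rightarrow> int) set" where
  "Wset hs \<beta> = {a\<in>semigrp hs. \<forall>i<length hs. lin (hs!i) a \<ge> int (\<beta>!i)}"

definition WsetB :: "('n::finite \<Rightarrow> int) list \<Rightarrow> nat list set \<Rightarrow> ('n \<Rightarrow> int) set" where
  "WsetB hs B = (\<Union>\<beta>\<in>B. Wset hs \<beta>)"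

definition IB :: "('n::finite \<Rightarrow> int) list \<Rightarrow> ('n \<Rightarrow> int) \<Rightarrow> 'n mpoly \<Rightarrow> nat list set \<Rightarrow> 'n laurent set" where
  "IB hs d f B = mon_ideal hs (Vmon' d f \<inter> WsetB hs B)"

end

theory Submission
  imports Defs
begin

lemma lin_add: "lin h (a + b) = lin h a + lin h b"
  unfolding lin_def by (simp add: sum.distrib distrib_left)

lemma lin_diff: "lin h (a - b) = lin h a - lin h b"
  unfolding lin_def by (simp add: sum_subtractf right_diff_distrib)

lemma lin_uminus: "lin h (- a) = - lin h a"
  unfolding lin_def by (simp add: sum_negf)

lemma lin_line:
  assumes "(\<lambda>k. real_of_int (b k)) = (\<lambda>k. real_of_int (a k) + t * real_of_int (d k))"
  shows "real_of_int (lin h b) = real_of_int (lin h a) + t * real_of_int (lin h d)"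
proof -
  have "real_of_int (lin h b) = (\<Sum>k\<in>UNIV. real_of_int (h k) * real_of_int (b k))"
    unfolding lin_def by simp
  also have "\<dots> = (\<Sum>k\<in>UNIV. real_of_int (h k) * (real_of_int (a k) + t * real_of_int (d k)))"
    using fun_cong[OF assms] by simp
  also have "\<dots> = (\<Sum>k\<in>UNIV. real_of_int (h k) * real_of_int (a k)) + t * (\<Sum>k\<in>UNIV. real_of_int (h k) * real_of_int (d k))"
    by (simp add: distrib_left sum.distrib sum_distrib_left algebra_simps)
  finally show ?thesis unfolding lin_def by simp
qed

lemma semigrp_add: "a \<in> semigrp hs \<Longrightarrow> b \<in> semigrp hs \<Longrightarrow> a + b \<in> semigrp hs"
  unfolding semigrp_def by (auto simp: lin_add)

lemma line_semigrp:
  assumes "(\<lambda>k. real_of_int (b k)) = (\<lambda>k. real_of_int (a k) + t * real_of_int (d k))"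
    and "t \<le> 0" and "- d \<in> semigrp hs"
  shows "b - a \<in> semigrp hs"
  unfolding semigrp_def
proof (intro CollectI ballI)
  fix h assume h: "h \<in> set hs"
  have "lin h (- d) \<ge> 0" using assms(3) h unfolding semigrp_def by auto
  hence hd: "real_of_int (lin h d) \<le> 0" by (simp add: lin_uminus)
  have "real_of_int (lin h b) = real_of_int (lin h a) + t * real_of_int (lin h d)"
    using lin_line[OF assms(1)] .
  moreover have "t * real_of_int (lin h d) \<ge> 0" using hd assms(2)
    by (simp add: mult_nonpos_nonpos)
  ultimately have "real_of_int (lin h b) \<ge> real_of_int (lin h a)" by linarith
  thus "0 \<le> lin h (b - a)" by (simp add: lin_diff)
qed

lemma line_par:
  assumes "(\<lambda>k. real_of_int (b k)) = (\<lambda>k. real_of_int (a k) + t * real_of_int (d k))"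
    and "lin h d = 0"
  shows "lin h b = lin h a"
  using lin_line[OF assms(1), of h] assms(2) by simp

definition Eset :: "('n::finite \<Rightarrow> int) list \<Rightarrow> ('n \<Rightarrow> int) set \<Rightarrow> ('n \<Rightarrow> int) set" where
  "Eset hs G = {g + s | g s. g \<in> G \<and> s \<in> semigrp hs}"

lemma Eset_sub: "G \<subseteq> semigrp hs \<Longrightarrow> Eset hs G \<subseteq> semigrp hs"
  unfolding Eset_def using semigrp_add by blast

lemma Eset_add: "x \<in> Eset hs G \<Longrightarrow> s \<in> semigrp hs \<Longrightarrow> x + s \<in> Eset hs G"
  unfolding Eset_def
proof -
  assume "x \<in> {g + s |g s. g \<in> G \<and> s \<in> semigrp hs}" "s \<in> semigrp hs"
  then obtain g s' where "x = g + s'" "g \<in> G" "s' \<in> semigrp hs" by blast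
  thus "x + s \<in> {g + s |g s. g \<in> G \<and> s \<in> semigrp hs}"
    using semigrp_add[OF \<open>s' \<in> _\<close> \<open>s \<in> _\<close>] by (auto simp: add.assoc)
qed

lemma mon_ideal_sub:
  assumes "p \<in> mon_ideal hs G"
  shows "Poly_Mapping.keys p \<subseteq> Eset hs G"
proof -
  obtain F r where F: "finite F" "F \<subseteq> G" "\<forall>a\<in>F. r a \<in> ringR hs" "p = (\<Sum>a\<in>F. r a * xmon a)"
    using assms unfolding mon_ideal_def by blast
  have "Poly_Mapping.keys (r a * xmon a) \<subseteq> Eset hs G" if "a \<in> F" for a
  proof
    fix x assume "x \<in> Poly_Mapping.keys (r a * xmon a)"
    then obtain y z where "x = y + z" "y \<in> Poly_Mapping.keys (r a)" "z \<in> Poly_Mapping.keys (xmon a)"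
      using keys_mult by blast
    moreover have "z = a" using \<open>z \<in> _\<close> by (simp add: xmon_def split: if_splits)
    moreover have "y \<in> semigrp hs" using F(3) that \<open>y \<in> _\<close> unfolding ringR_def by auto
    ultimately show "x \<in> Eset hs G" unfolding Eset_def using F(2) that
      by (auto simp: add.commute)
  qed
  thus ?thesis using F(4) keys_sum[of "\<lambda>a. r a * xmon a" F] by blast
qed

lemma mon_ideal_sup:
  assumes "Poly_Mapping.keys p \<subseteq> Eset hs G"
  shows "p \<in> mon_ideal hs G"
proof -
  have "\<forall>k\<in>Poly_Mapping.keys p. \<exists>g. g \<in> G \<and> k - g \<in> semigrp hs"
  proof
    fix k assume "k \<in> Poly_Mapping.keys p"
    hence "k \<in> Eset hs G" using assms by blast
    then obtain g s where gs: "k = g + s" "g \<in> G" "s \<in> semigrp hs" unfolding Eset_def by blast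
    hence "k - g = s" by simp
    thus "\<exists>g. g \<in> G \<and> k - g \<in> semigrp hs" using gs by metis
  qed
  then obtain g where g0: "\<forall>k\<in>Poly_Mapping.keys p. g k \<in> G \<and> k - g k \<in> semigrp hs"
    by (rule bchoice[THEN exE]) blast
  hence g: "\<And>k. k \<in> Poly_Mapping.keys p \<Longrightarrow> g k \<in> G \<and> k - g k \<in> semigrp hs" by blast
  define K where "K = Poly_Mapping.keys p"
  define F where "F = g ` K"
  define r where "r a = (\<Sum>k\<in>{k\<in>K. g k = a}. Poly_Mapping.single (k - a) (Poly_Mapping.lookup p k))" for a
  have fin: "finite F" unfolding F_def K_def by simp
  have FG: "F \<subseteq> G" unfolding F_def K_def using g by auto
  have rR: "r a \<in> ringR hs" for a
  proof -
    have "Poly_Mapping.keys (r a) \<subseteq> (\<Union>k\<in>{k\<in>K. g k = a}. Poly_Mapping.keys (Poly_Mapping.single (k - a) (Poly_Mapping.lookup p k)))"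
      unfolding r_def by (rule keys_sum)
    also have "\<dots> \<subseteq> semigrp hs" using g unfolding K_def by auto
    finally show ?thesis unfolding ringR_def by simp
  qed
  have rx: "r a * xmon a = (\<Sum>k\<in>{k\<in>K. g k = a}. Poly_Mapping.single k (Poly_Mapping.lookup p k))" for a
    unfolding r_def xmon_def by (simp add: sum_distrib_right mult_single)
  have "(\<Sum>a\<in>F. r a * xmon a) = (\<Sum>a\<in>F. \<Sum>k\<in>{k\<in>K. g k = a}. Poly_Mapping.single k (Poly_Mapping.lookup p k))"
    using rx by simp
  also have "\<dots> = (\<Sum>k\<in>K. Poly_Mapping.single k (Poly_Mapping.lookup p k))"
    by (rule sum.group) (simp_all add: F_def K_def)
  also have "\<dots> = p"
  proof (rule poly_mapping_eqI)
    fix j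
    have "Poly_Mapping.lookup (\<Sum>k\<in>K. Poly_Mapping.single k (Poly_Mapping.lookup p k)) j
        = (\<Sum>k\<in>K. if k = j then Poly_Mapping.lookup p k else 0)"
      by (simp add: lookup_sum lookup_single when_def)
    also have "\<dots> = Poly_Mapping.lookup p j"
      by (simp add: sum.delta' K_def in_keys_iff)
    finally show "Poly_Mapping.lookup (\<Sum>k\<in>K. Poly_Mapping.single k (Poly_Mapping.lookup p k)) j = Poly_Mapping.lookup p j" .
  qed
  finally have eq: "p = (\<Sum>a\<in>F. r a * xmon a)" by simp
  show ?thesis unfolding mon_ideal_def
    apply (rule CollectI)
    apply (rule exI[of _ F])
    apply (rule exI[of _ r])
    using fin FG rR eq by simp
qed

lemma mon_ideal_eq: "mon_ideal hs G = {p. Poly_Mapping.keys p \<subseteq> Eset hs G}"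
proof (rule set_eqI, rule iffI)
  fix p :: "'a::finite laurent" assume "p \<in> mon_ideal hs G"
  thus "p \<in> {p. Poly_Mapping.keys p \<subseteq> Eset hs G}" using mon_ideal_sub[of p hs G] by simp
next
  fix p :: "'a::finite laurent" assume "p \<in> {p. Poly_Mapping.keys p \<subseteq> Eset hs G}"
  thus "p \<in> mon_ideal hs G" using mon_ideal_sup[of p hs G] by simp
qed

lemma lookup_delta:
  "Poly_Mapping.lookup (delta d f p) b = Poly_Mapping.lookup p (b - d) * peval f (b - d)"
proof -
  have "Poly_Mapping.lookup (delta d f p) b =
     (\<Sum>a\<in>Poly_Mapping.keys p. if a = b - d then Poly_Mapping.lookup p a * peval f a else 0)"
  proof -
    have e: "\<And>a. (a + d = b) = (a = b - d)" by auto
    show ?thesis unfolding delta_def lookup_sum lookup_single when_def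
      by (rule sum.cong) (simp_all only: e)
  qed
  also have "\<dots> = Poly_Mapping.lookup p (b - d) * peval f (b - d)"
    by (simp add: sum.delta' in_keys_iff)
  finally show ?thesis .
qed

lemma keys_delta: "b \<in> Poly_Mapping.keys (delta d f p) \<longleftrightarrow>
   b - d \<in> Poly_Mapping.keys p \<and> peval f (b - d) \<noteq> 0"
  by (simp add: in_keys_iff lookup_delta)

lemma keys_xmon [simp]: "Poly_Mapping.keys (xmon e) = {e}"
  by (simp add: xmon_def)

lemma fixed_A:
  assumes "delta_fixed d f {p. Poly_Mapping.keys p \<subseteq> E}" "e \<in> E" "peval f e \<noteq> 0"
  shows "e + d \<in> E"
proof -
  have "delta d f (xmon e) \<in> {p. Poly_Mapping.keys p \<subseteq> E}"
  proof -
    have "xmon e \<in> {p. Poly_Mapping.keys p \<subseteq> E}" using assms(2) by simp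
    hence "delta d f (xmon e) \<in> delta d f ` {p. Poly_Mapping.keys p \<subseteq> E}" by (rule imageI)
    thus ?thesis using assms(1) unfolding delta_fixed_def by simp
  qed
  moreover have "e + d \<in> Poly_Mapping.keys (delta d f (xmon e))"
    using assms(3) by (simp add: keys_delta)
  ultimately show ?thesis by blast
qed

lemma fixed_B:
  assumes "delta_fixed d f {p. Poly_Mapping.keys p \<subseteq> E}" "e \<in> E"
  shows "peval f (e - d) \<noteq> 0"
proof -
  have "xmon e \<in> delta d f ` {p. Poly_Mapping.keys p \<subseteq> E}"
    using assms unfolding delta_fixed_def by auto
  then obtain p where "delta d f p = xmon e" by (elim imageE) simp
  hence "e \<in> Poly_Mapping.keys (delta d f p)" by simp
  thus ?thesis by (simp add: keys_delta)
qed

lemma fixed_C: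
  assumes A: "\<And>e. e \<in> E \<Longrightarrow> peval f e \<noteq> 0 \<Longrightarrow> e + d \<in> E"
    and B: "\<And>e. e \<in> E \<Longrightarrow> peval f (e - d) \<noteq> 0"
    and C: "\<And>e. e \<in> E \<Longrightarrow> e - d \<in> E"
  shows "delta_fixed d f {p. Poly_Mapping.keys p \<subseteq> E}"
  unfolding delta_fixed_def
proof (intro equalityI subsetI)
  fix q assume "q \<in> delta d f ` {p. Poly_Mapping.keys p \<subseteq> E}"
  then obtain p where p: "Poly_Mapping.keys p \<subseteq> E" "q = delta d f p" by blast
  have "b \<in> E" if "b \<in> Poly_Mapping.keys q" for b
  proof -
    have "b - d \<in> E" "peval f (b - d) \<noteq> 0" using that p by (auto simp: keys_delta)
    from A[OF this] show ?thesis by simp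
  qed
  thus "q \<in> {p. Poly_Mapping.keys p \<subseteq> E}" by blast
next
  fix q :: "'a::finite laurent" assume q: "q \<in> {p. Poly_Mapping.keys p \<subseteq> E}"
  define g where "g a = Poly_Mapping.lookup q (a + d) / peval f a" for a
  have sub: "{a. g a \<noteq> 0} \<subseteq> (\<lambda>b. b - d) ` Poly_Mapping.keys q"
  proof
    fix a assume "a \<in> {a. g a \<noteq> 0}"
    hence "a + d \<in> Poly_Mapping.keys q" by (auto simp: g_def in_keys_iff)
    thus "a \<in> (\<lambda>b. b - d) ` Poly_Mapping.keys q" by (rule rev_image_eqI) simp
  qed
  hence fin: "finite {a. g a \<noteq> 0}" by (rule finite_subset) simp
  define p where "p = Abs_poly_mapping g"
  have lp: "Poly_Mapping.lookup p = g" unfolding p_def using fin by simp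
  have "Poly_Mapping.keys p \<subseteq> E"
  proof
    fix a assume "a \<in> Poly_Mapping.keys p"
    hence "g a \<noteq> 0" by (simp add: in_keys_iff lp)
    then obtain b where "b \<in> Poly_Mapping.keys q" "a = b - d" using sub by blast
    thus "a \<in> E" using q C by auto
  qed
  moreover have "delta d f p = q"
  proof (rule poly_mapping_eqI)
    fix b
    show "Poly_Mapping.lookup (delta d f p) b = Poly_Mapping.lookup q b"
    proof (cases "b \<in> Poly_Mapping.keys q")
      case True
      hence "peval f (b - d) \<noteq> 0" using B q by auto
      thus ?thesis by (simp add: lookup_delta lp g_def)
    next
      case False
      thus ?thesis by (simp add: lookup_delta lp g_def in_keys_iff)
    qed
  qed
  ultimately show "q \<in> delta d f ` {p. Poly_Mapping.keys p \<subseteq> E}" by blast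
qed

lemma key:
  assumes A: "\<And>e. e \<in> E \<Longrightarrow> peval f e \<noteq> 0 \<Longrightarrow> e + d \<in> E"
   and B: "\<And>e. e \<in> E \<Longrightarrow> peval f (e - d) \<noteq> 0"
   and ES: "E \<subseteq> semigrp hs"
   and EA: "\<And>x s. x \<in> E \<Longrightarrow> s \<in> semigrp hs \<Longrightarrow> x + s \<in> E"
   and md: "- d \<in> semigrp hs"
   and h0: "h0 \<in> set hs" "lin h0 d < 0"
   and dnz: "d \<noteq> 0"
   and u: "u \<in> E" "u \<in> Wset hs \<beta>" and comp: "compatible hs d \<beta>"
  shows "\<exists>b \<in> Vmon' d f \<inter> Wset hs \<beta>. u - b \<in> semigrp hs"
proof -
  define pt where "pt k = (\<lambda>i. u i + int k * d i)" for k :: nat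
  have pt0: "pt 0 = u" unfolding pt_def by simp
  have ptS: "pt (Suc k) = pt k + d" for k unfolding pt_def by (auto simp: algebra_simps)
  have linpt: "lin h (pt k) = lin h u + int k * lin h d" for h k
    unfolding lin_def pt_def by (simp add: sum.distrib sum_distrib_left algebra_simps)
  have ex: "\<exists>k. peval f (pt k) = 0"
  proof (rule ccontr)
    assume no: "\<not> (\<exists>k. peval f (pt k) = 0)"
    have all: "pt k \<in> E" for k
    proof (induction k)
      case 0 then show ?case using u pt0 by simp
    next
      case (Suc k) then show ?case using A no ptS by metis
    qed
    define k where "k = nat (lin h0 u + 1)"
    have "lin h0 u \<ge> 0" using u(1) ES h0(1) unfolding semigrp_def by auto
    hence kk: "int k = lin h0 u + 1" unfolding k_def by simp
    have "lin h0 (pt k) \<ge> 0" using all[of k] ES h0(1) unfolding semigrp_def by auto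
    moreover have "(lin h0 u + 1) * lin h0 d \<le> (lin h0 u + 1) * (-1)"
      using mult_left_mono[of "lin h0 d" "-1" "lin h0 u + 1"] h0(2) \<open>lin h0 u \<ge> 0\<close> by simp
    ultimately show False using linpt[of h0 k] kk by simp
  qed
  define k0 where "k0 = (LEAST k. peval f (pt k) = 0)"
  have fk0: "peval f (pt k0) = 0" unfolding k0_def using ex by (rule LeastI_ex)
  have before: "j < k0 \<Longrightarrow> peval f (pt j) \<noteq> 0" for j unfolding k0_def by (rule not_less_Least)
  have inE: "j \<le> k0 \<Longrightarrow> pt j \<in> E" for j
  proof (induction j)
    case 0 then show ?case using u pt0 by simp
  next
    case (Suc j) then show ?case using A before ptS by (metis Suc_le_lessD less_imp_le_nat)
  qed
  define w where "w = pt k0"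
  have wE: "w \<in> E" using inE w_def by simp
  have wV: "w \<in> Vmon f" using fk0 w_def by (simp add: Vmon_def)
  have wline: "(\<lambda>k. real_of_int (w k)) = (\<lambda>k. real_of_int (u k) + real k0 * real_of_int (d k))"
    unfolding w_def pt_def by simp
  define T where "T = Tset d f w"
  have T0: "0 \<in> T" unfolding T_def Tset_def using wV by auto
  have Tgt: "t > -1" if tT: "t \<in> T" for t
  proof (rule ccontr)
    assume "\<not> t > -1"
    hence t1: "t + 1 \<le> 0" by simp
    obtain b where b: "b \<in> Vmon f" "(\<lambda>k. real_of_int (b k)) = (\<lambda>k. real_of_int (w k) + t * real_of_int (d k))"
      using tT unfolding T_def Tset_def by blast
    have cl: "(\<lambda>k. real_of_int ((b + d) k)) = (\<lambda>k. real_of_int (w k) + (t + 1) * real_of_int (d k))"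
      using fun_cong[OF b(2)] by (auto simp: algebra_simps)
    have "b + d - w \<in> semigrp hs" by (rule line_semigrp[OF cl t1 md])
    hence "w + (b + d - w) \<in> E" using EA wE by blast
    hence "b + d \<in> E" by simp
    from B[OF this] b(1) show False by (simp add: Vmon_def)
  qed
  have "\<exists>i. d i \<noteq> 0"
  proof (rule ccontr)
    assume "\<not> (\<exists>i. d i \<noteq> 0)"
    hence "d = 0" by (simp add: fun_eq_iff)
    thus False using dnz by simp
  qed
  then obtain i0 where i0: "d i0 \<noteq> 0" by blast
  have fin: "finite (T \<inter> {..c})" for c
  proof -
    define N where "N = \<lceil>(\<bar>c\<bar> + 1) * \<bar>real_of_int (d i0)\<bar>\<rceil>"
    have "T \<inter> {..c} \<subseteq> (\<lambda>n. real_of_int n / real_of_int (d i0)) ` {-N..N}"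
    proof
      fix t assume t: "t \<in> T \<inter> {..c}"
      obtain b where b: "(\<lambda>k. real_of_int (b k)) = (\<lambda>k. real_of_int (w k) + t * real_of_int (d k))"
        using t unfolding T_def Tset_def by blast
      define n where "n = b i0 - w i0"
      have nt: "real_of_int n = t * real_of_int (d i0)"
        using fun_cong[OF b, of i0] unfolding n_def by simp
      have tn: "t = real_of_int n / real_of_int (d i0)" using nt i0 by simp
      have "\<bar>t\<bar> \<le> \<bar>c\<bar> + 1" using t Tgt[of t] by auto
      hence "\<bar>real_of_int n\<bar> \<le> (\<bar>c\<bar> + 1) * \<bar>real_of_int (d i0)\<bar>"
        unfolding nt abs_mult by (simp add: mult_right_mono)
      hence "\<bar>n\<bar> \<le> N" unfolding N_def by linarith
      hence "n \<in> {-N..N}" by auto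
      thus "t \<in> (\<lambda>n. real_of_int n / real_of_int (d i0)) ` {-N..N}" using tn by blast
    qed
    thus ?thesis by (rule finite_subset) simp
  qed
  define m where "m = Min (T \<inter> {..0})"
  have mT: "m \<in> T \<inter> {..0}" unfolding m_def using fin[of 0] T0 by (intro Min_in) auto
  have mle: "m \<le> t" if "t \<in> T" for t
  proof (cases "t \<le> 0")
    case True thus ?thesis unfolding m_def using fin[of 0] that by (intro Min_le) auto
  next
    case False thus ?thesis using mT by auto
  qed
  have valm: "val d f w = m" unfolding val_def T_def[symmetric]
    by (rule cInf_eq_minimum) (use mT mle in auto)
  have bdd: "bdd_below T" unfolding bdd_below_def using Tgt by (meson less_imp_le)
  have vf: "val_finite d f w" unfolding val_finite_def T_def[symmetric] using T0 bdd by auto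
  define P where "P = {t\<in>T. val d f w \<le> t \<and> t < val d f w + 1}"
  have mgt: "m > -1" using mT Tgt by auto
  have P0: "0 \<in> P" unfolding P_def using T0 valm mT mgt by auto
  have finP: "finite P"
  proof (rule finite_subset[OF _ fin[of 1]])
    have "m \<le> 0" using mT by auto
    thus "P \<subseteq> T \<inter> {..1}" unfolding P_def valm by auto
  qed
  define pv where "pv = Max P"
  have pvP: "pv \<in> P" unfolding pv_def using finP P0 by (intro Max_in) auto
  have pv0: "pv \<ge> 0" unfolding pv_def using finP P0 by (intro Max_ge)
  have pval_eq: "pval d f w = pv" unfolding pval_def pv_def P_def T_def ..
  have pvT: "pv \<in> T" and pvlt: "pv < m + 1" using pvP unfolding P_def valm by auto
  obtain b where bV: "b \<in> Vmon f" and bl: "(\<lambda>k. real_of_int (b k)) = (\<lambda>k. real_of_int (w k) + pv * real_of_int (d k))"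
    using pvT unfolding T_def Tset_def by blast
  have bV': "b \<in> Vmon' d f" unfolding Vmon'_def using vf bl pval_eq by auto
  have w'l: "(\<lambda>k. real_of_int ((b - d) k)) = (\<lambda>k. real_of_int (w k) + (pv - 1) * real_of_int (d k))"
    using fun_cong[OF bl] by (auto simp: algebra_simps)
  have "pv - 1 \<le> 0" using pvlt mT by auto
  from line_semigrp[OF w'l this md] have "b - d - w \<in> semigrp hs" .
  hence "w + (b - d - w) \<in> E" using EA wE by blast
  hence w'E: "b - d \<in> E" by simp
  have "peval f (b - d) \<noteq> 0"
  proof
    assume "peval f (b - d) = 0"
    hence "pv - 1 \<in> T" unfolding T_def Tset_def Vmon_def using w'l by blast
    hence "m \<le> pv - 1" using mle by blast
    thus False using pvlt by simp
  qed
  from A[OF w'E this] have "b \<in> E" by simp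
  hence bS: "b \<in> semigrp hs" using ES by blast
  have bu: "(\<lambda>k. real_of_int (b k)) = (\<lambda>k. real_of_int (u k) + (real k0 + pv) * real_of_int (d k))"
    using fun_cong[OF bl] fun_cong[OF wline] by (auto simp: algebra_simps)
  have ub: "(\<lambda>k. real_of_int (u k)) = (\<lambda>k. real_of_int (b k) + (- (real k0 + pv)) * real_of_int (d k))"
    using fun_cong[OF bu] by (auto simp: algebra_simps)
  have "- (real k0 + pv) \<le> 0" using pv0 by simp
  from line_semigrp[OF ub this md] have ubS: "u - b \<in> semigrp hs" .
  have "b \<in> Wset hs \<beta>"
    unfolding Wset_def
  proof (intro CollectI conjI allI impI bS)
    fix i assume i: "i < length hs"
    show "int (\<beta> ! i) \<le> lin (hs ! i) b"
    proof (cases "\<beta> ! i = 0")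
      case True
      thus ?thesis using bS i unfolding semigrp_def by auto
    next
      case False
      hence "lin (hs ! i) d = 0" using comp i unfolding compatible_def by auto
      hence "lin (hs ! i) b = lin (hs ! i) u" by (rule line_par[OF bu])
      thus ?thesis using u(2) i unfolding Wset_def by auto
    qed
  qed
  thus ?thesis using bV' ubS by blast
qed

lemma linR_real: "linR h (\<lambda>k. real_of_int (d k)) = real_of_int (lin h d)"
  unfolding linR_def lin_def by simp

lemma exists_neg:
  assumes "facet_data hs" "d \<noteq> 0" "- d \<in> semigrp hs"
  shows "\<exists>h0\<in>set hs. lin h0 d < 0"
proof (rule ccontr)
  assume "\<not> ?thesis"
  hence z: "\<forall>h\<in>set hs. lin h d = 0" using assms(3) unfolding semigrp_def by (force simp: lin_uminus)
  have "\<forall>h\<in>set hs. linR h (\<lambda>k. real_of_int (d k)) = 0" using z by (simp add: linR_real)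
  hence "(\<lambda>k. real_of_int (d k)) = 0" using assms(1) unfolding facet_data_def by blast
  hence "d = 0" by (simp add: fun_eq_iff)
  thus False using assms(2) by simp
qed

lemma Wset_shift:
  assumes "x \<in> Wset hs \<beta>" "compatible hs d \<beta>" "x + d \<in> semigrp hs"
  shows "x + d \<in> Wset hs \<beta>"
  unfolding Wset_def
proof (intro CollectI conjI allI impI assms(3))
  fix i assume i: "i < length hs"
  show "int (\<beta> ! i) \<le> lin (hs ! i) (x + d)"
  proof (cases "\<beta> ! i = 0")
    case True
    thus ?thesis using assms(3) i unfolding semigrp_def by auto
  next
    case False
    hence "lin (hs ! i) d = 0" using assms(2) i unfolding compatible_def by auto
    thus ?thesis using assms(1) i unfolding Wset_def by (auto simp: lin_add)
  qed
qed

theorem mainTheorem12: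
  fixes hs :: "('n::finite \<Rightarrow> int) list"
    and d :: "'n \<Rightarrow> int"
    and f :: "'n mpoly"
    and B :: "nat list set"
  assumes "facet_data hs"
    and "Hpoly hs d dvd f"
    and "d \<noteq> 0"
    and "- d \<in> semigrp hs"
    and "\<forall>\<beta>\<in>B. compatible hs d \<beta>"
    and "delta_fixed d f (IB hs d f B)"
  shows "\<forall>B'. (\<forall>\<beta>\<in>B'. compatible hs d \<beta>) \<and> WsetB hs B' \<subseteq> WsetB hs B
           \<longrightarrow> delta_fixed d f (IB hs d f B')"
proof (intro allI impI, elim conjE)
  fix B' assume cB': "\<forall>\<beta>\<in>B'. compatible hs d \<beta>" and sub: "WsetB hs B' \<subseteq> WsetB hs B"
  define G where "G = Vmon' d f \<inter> WsetB hs B"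
  define G' where "G' = Vmon' d f \<inter> WsetB hs B'"
  define E where "E = Eset hs G"
  define E' where "E' = Eset hs G'"
  have WS: "WsetB hs X \<subseteq> semigrp hs" for X unfolding WsetB_def Wset_def by auto
  have GS: "G \<subseteq> semigrp hs" and G'S: "G' \<subseteq> semigrp hs" using WS unfolding G_def G'_def by auto
  have IBeq: "IB hs d f X = {p. Poly_Mapping.keys p \<subseteq> Eset hs (Vmon' d f \<inter> WsetB hs X)}" for X
    unfolding IB_def mon_ideal_eq ..
  have fixed: "delta_fixed d f {p. Poly_Mapping.keys p \<subseteq> E}"
    using assms(6) unfolding IBeq E_def G_def .
  note A = fixed_A[OF fixed] and Bf = fixed_B[OF fixed]
  have ES: "E \<subseteq> semigrp hs" unfolding E_def using GS by (rule Eset_sub)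
  have EA: "x \<in> E \<Longrightarrow> s \<in> semigrp hs \<Longrightarrow> x + s \<in> E" for x s unfolding E_def by (rule Eset_add)
  obtain h0 where h0: "h0 \<in> set hs" "lin h0 d < 0" using exists_neg[OF assms(1,3,4)] by blast
  have GG: "G' \<subseteq> G" unfolding G_def G'_def using sub by auto
  have E'E: "E' \<subseteq> E" unfolding E'_def E_def Eset_def using GG by blast
  have E'W: "\<exists>\<beta>\<in>B'. x \<in> Wset hs \<beta>" if xE: "x \<in> E'" for x
  proof -
    obtain g s where gs: "x = g + s" "g \<in> G'" "s \<in> semigrp hs" using xE unfolding E'_def Eset_def by blast
    then obtain \<beta> where \<beta>: "\<beta> \<in> B'" "g \<in> Wset hs \<beta>" unfolding G'_def WsetB_def by blast
    have "x \<in> semigrp hs" using gs G'S semigrp_add by blast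
    moreover have "\<forall>i<length hs. int (\<beta> ! i) \<le> lin (hs ! i) x"
    proof (intro allI impI)
      fix i assume i: "i < length hs"
      have "lin (hs ! i) s \<ge> 0" using gs(3) i unfolding semigrp_def by auto
      thus "int (\<beta> ! i) \<le> lin (hs ! i) x" using \<beta>(2) i gs(1) unfolding Wset_def by (auto simp: lin_add)
    qed
    ultimately show ?thesis using \<beta>(1) unfolding Wset_def by blast
  qed
  have toE': "x \<in> E'" if xx: "x \<in> E" "x \<in> Wset hs \<beta>" "\<beta> \<in> B'" for x \<beta>
  proof -
    obtain b where b: "b \<in> Vmon' d f \<inter> Wset hs \<beta>" "x - b \<in> semigrp hs"
      using key[OF A Bf ES EA assms(4) h0 assms(3) xx(1,2)] cB' xx(3) by blast
    have "b \<in> G'" using b(1) xx(3) unfolding G'_def WsetB_def by blast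
    hence "b + (x - b) \<in> E'" unfolding E'_def Eset_def using b(2) by blast
    thus ?thesis by simp
  qed
  have "delta_fixed d f {p. Poly_Mapping.keys p \<subseteq> E'}"
  proof (rule fixed_C)
    fix e assume e: "e \<in> E'" "peval f e \<noteq> 0"
    hence eE: "e \<in> E" using E'E by blast
    have edE: "e + d \<in> E" using A[OF eE e(2)] .
    obtain \<beta> where \<beta>: "\<beta> \<in> B'" "e \<in> Wset hs \<beta>" using E'W[OF e(1)] by blast
    have "e + d \<in> Wset hs \<beta>" using Wset_shift[OF \<beta>(2)] cB' \<beta>(1) edE ES by blast
    thus "e + d \<in> E'" using toE' edE \<beta>(1) by blast
  next
    fix e assume "e \<in> E'"
    thus "peval f (e - d) \<noteq> 0" using Bf E'E by blast
  next
    fix e assume "e \<in> E'"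
    hence "e + (- d) \<in> E'" unfolding E'_def using assms(4) by (rule Eset_add)
    thus "e - d \<in> E'" by simp
  qed
  thus "delta_fixed d f (IB hs d f B')" unfolding IBeq E'_def G'_def .
qed

end
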